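(* Fix $t\ge 0$. Let $\sigma=\{x_1,\dots,x_m\}\subseteq\mathcal C$ and $\tau=\{y_1,\dots,y_n\}\subseteq\mathcal Y^\circ$ be finite subsets, and set $A:=\max_i r_{\mathcal C}(x_i)$, $B:=\max_j r_{\mathcal Y}(y_j)$. Then $\sigma\cup\tau$ is a simplex of the intrinsic Čech complex $\check{C}_t(\mathcal X,d_\theta)$ if and only if at least one of the following holds: (C) there exists $z\in\mathcal C$ with $z\in\bigcap_{i=1}^m \overline{B}_{\mathcal C}(x_i,t)$ and $\|(r_{\mathcal C}(z),B)\|_{\ell^p}\le t$; (Y) there exists $w\in\mathcal Y$ with $w\in\bigcap_{j=1}^n \overline{B}_{\mathcal Y}(y_j,t)$ and $\|(A,r_{\mathcal Y}(w))\|_{\ell^p}\le t$.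
   Context: Let $A$ be a unital $C^*$-algebra, $H$ a Hilbert space, $\mathcal X=\mathrm{CB}(A,B(H))$, $\mathcal C=\mathrm{CP}(A,B(H))$ with Bures distance $\beta$. Fix $\theta\in\mathcal C$, $\lambda>0$, $\alpha\in(0,1]$, $p\in[1,\infty]$, and let $d_\theta=\beta^{BK}_{\theta,\lambda,p,\alpha}$ be the Bures--Kuratowski metric. Let $\mathcal Y=(\mathcal X\setminus\mathcal C)\sqcup\{\ast\}$ with metric $d_{\mathrm{reg}}$ ($=\lambda\delta_{\mathrm{reg}}^\alpha$ on non-CP pairs and $\lambda\delta_{\mathrm{reg}}(\cdot,0)^\alpha$ to $\ast$, $\delta_{\mathrm{reg}}$ the regular-representation metric), $\mathcal Y^\circ=\mathcal Y\setminus\{\ast\}$. Then $(\mathcal X,d_\theta)$ is the $\ell^p$ wedge of $(\mathcal C,\beta,\theta)$ and $(\mathcal Y,d_{\mathrm{reg}},\ast)$ with $\theta\sim\ast$: $d_\theta=\beta$ on $\mathcal C$, $d_\theta=d_{\mathrm{reg}}$ on $\mathcal Y$, and $d_\theta(x,y)=\|(r_{\mathcal C}(x),r_{\mathcal Y}(y))\|_{\ell^p}$ for $x\in\mathcal C$, $y\in\mathcal Y$, where $r_{\mathcal C}(x)=\beta(x,\theta)$, $r_{\mathcal Y}(y)=d_{\mathrm{reg}}(y,\ast)$. $\overline{B}_{\mathcal C}$, $\overline{B}_{\mathcal Y}$ are closed balls in $(\mathcal C,\beta)$, $(\mathcal Y,d_{\mathrm{reg}})$. The intrinsic Čech complex $\check{C}_t(Z,d)$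 of a metric space is the nerve of its closed radius-$t$ balls: a finite $\sigma\subseteq Z$ is a simplex iff $\bigcap_{z\in\sigma}\overline{B}_Z(z,t)\neq\varnothing$. *)

theory Defs
  imports "HOL-Analysis.Analysis"
begin

definition lp_norm2 :: "ereal \<Rightarrow> real \<Rightarrow> real \<Rightarrow> real" where
  "lp_norm2 p a b =
     (if p = \<infinity> then max \<bar>a\<bar> \<bar>b\<bar>
      else (\<bar>a\<bar> powr real_of_ereal p + \<bar>b\<bar> powr real_of_ereal p) powr (1 / real_of_ereal p))"

text \<open>Carrier of the wedge X = C \<squnion> Y\<degree>, where Y\<degree> = Y - {star}; the basepoint theta of C
  is identified with star.\<close>
definition wedge_carrier :: "'a set \<Rightarrow> 'b set \<Rightarrow> 'b \<Rightarrow> ('a + 'b) set" where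
  "wedge_carrier C Y star = Inl ` C \<union> Inr ` (Y - {star})"

fun wedge_dist :: "ereal \<Rightarrow> ('a \<Rightarrow> 'a \<Rightarrow> real) \<Rightarrow> 'a \<Rightarrow> ('b \<Rightarrow> 'b \<Rightarrow> real) \<Rightarrow> 'b
                   \<Rightarrow> ('a + 'b) \<Rightarrow> ('a + 'b) \<Rightarrow> real" where
  "wedge_dist p dC theta dY star (Inl x) (Inl y) = dC x y"
| "wedge_dist p dC theta dY star (Inr x) (Inr y) = dY x y"
| "wedge_dist p dC theta dY star (Inl x) (Inr y) = lp_norm2 p (dC x theta) (dY y star)"
| "wedge_dist p dC theta dY star (Inr y) (Inl x) = lp_norm2 p (dC x theta) (dY y star)"

definition cech_simplex :: "'a set \<Rightarrow> ('a \<Rightarrow> 'a \<Rightarrow> real) \<Rightarrow> real \<Rightarrow> 'a set \<Rightarrow> bool" where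
  "cech_simplex Z d t S \<longleftrightarrow> finite S \<and> S \<subseteq> Z \<and>
     (\<exists>w\<in>Z. \<forall>s\<in>S. w \<in> Metric_space.mcball Z d s t)"

end

theory Submission
  imports Defs
begin

lemma powr_le_self_unit:
  fixes t q :: real assumes "0 \<le> t" "t \<le> 1" "q \<ge> 1"
  shows "t powr q \<le> t"
proof (cases "t = 0")
  case False
  then have "t powr q \<le> t powr 1" using assms by (intro powr_mono') auto
  then show ?thesis using assms by simp
qed simp

lemma cvx:
  fixes q x y t :: real
  assumes "q \<ge> 1" "x \<ge> 0" "y \<ge> 0" "0 \<le> t" "t \<le> 1"
  shows "((1-t)*x + t*y) powr q \<le> (1-t)*x powr q + t*y powr q"
proof -
  consider "x = 0" | "y = 0" | "x > 0" "y > 0" using assms by linarith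
  then show ?thesis
  proof cases
    case 1
    have "(t*y) powr q = t powr q * y powr q" using assms by (simp add: powr_mult)
    also have "\<dots> \<le> t * y powr q"
      using powr_le_self_unit[of t q] assms by (intro mult_right_mono) auto
    finally show ?thesis using 1 by simp
  next
    case 2
    have "((1-t)*x) powr q = (1-t) powr q * x powr q" using assms by (simp add: powr_mult)
    also have "\<dots> \<le> (1-t) * x powr q"
      using powr_le_self_unit[of "1-t" q] assms by (intro mult_right_mono) auto
    finally show ?thesis using 2 by simp
  next
    case 3
    show ?thesis using convex_onD[OF powr_convex[OF assms(1)], of t x y] 3 assms by simp
  qed
qed

lemma lp_fin: "p \<ge> 1 \<Longrightarrow> p \<noteq> \<infinity> \<Longrightarrow> p = ereal (real_of_ereal p) \<and> real_of_ereal p \<ge> 1"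
  by (cases p) auto

lemma lp_nonneg: "0 \<le> lp_norm2 p a b"
  unfolding lp_norm2_def by auto

lemma lp_sym: "lp_norm2 p a b = lp_norm2 p b a"
  unfolding lp_norm2_def by (auto simp: add.commute max.commute)

lemma lp_zero2:
  assumes "p \<ge> 1" shows "lp_norm2 p a 0 = \<bar>a\<bar>"
proof (cases "p = \<infinity>")
  case False
  then obtain q where q: "real_of_ereal p = q" "q \<ge> 1" using lp_fin[OF assms] by auto
  have "(\<bar>a\<bar> powr q) powr (1/q) = \<bar>a\<bar>" using q by (simp add: powr_powr)
  then show ?thesis using False q unfolding lp_norm2_def by simp
qed (simp add: lp_norm2_def)

lemma lp_mono:
  assumes "p \<ge> 1" "\<bar>a\<bar> \<le> \<bar>a'\<bar>" "\<bar>b\<bar> \<le> \<bar>b'\<bar>"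
  shows "lp_norm2 p a b \<le> lp_norm2 p a' b'"
proof (cases "p = \<infinity>")
  case False
  then obtain q where q: "real_of_ereal p = q" "q \<ge> 1" using lp_fin[OF assms(1)] by auto
  have "\<bar>a\<bar> powr q + \<bar>b\<bar> powr q \<le> \<bar>a'\<bar> powr q + \<bar>b'\<bar> powr q"
    using assms q by (intro add_mono powr_mono2) auto
  then have "(\<bar>a\<bar> powr q + \<bar>b\<bar> powr q) powr (1/q) \<le> (\<bar>a'\<bar> powr q + \<bar>b'\<bar> powr q) powr (1/q)"
    using q by (intro powr_mono2) auto
  then show ?thesis using False q unfolding lp_norm2_def by simp
qed (use assms in \<open>auto simp: lp_norm2_def\<close>)

lemma lp_ge1: "p \<ge> 1 \<Longrightarrow> \<bar>a\<bar> \<le> lp_norm2 p a b"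
  using lp_mono[of p a a 0 b] lp_zero2[of p a] by simp

lemma lp_ge2: "p \<ge> 1 \<Longrightarrow> \<bar>b\<bar> \<le> lp_norm2 p a b"
  using lp_ge1[of p b a] lp_sym by metis

lemma lp_tri:
  assumes "p \<ge> 1" "a \<ge> 0" "b \<ge> 0" "c \<ge> 0"
  shows "lp_norm2 p (a + c) b \<le> lp_norm2 p a b + c"
proof (cases "p = \<infinity>")
  case False
  then obtain q where q: "real_of_ereal p = q" "q \<ge> 1" using lp_fin[OF assms(1)] by auto
  define n where "n = (a powr q + b powr q) powr (1/q)"
  have N: "lp_norm2 p x y = (\<bar>x\<bar> powr q + \<bar>y\<bar> powr q) powr (1/q)" for x y
    using False q unfolding lp_norm2_def by simp
  have nn: "lp_norm2 p a b = n" using assms unfolding N n_def by simp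
  have n0: "n \<ge> 0" unfolding n_def by simp
  have nq: "n powr q = a powr q + b powr q" unfolding n_def using q by (simp add: powr_powr)
  show ?thesis
  proof (cases "n = 0 \<or> c = 0")
    case True
    then show ?thesis
    proof
      assume "n = 0"
      moreover have "\<bar>a\<bar> \<le> n" "\<bar>b\<bar> \<le> n" using lp_ge1[OF assms(1), of a b] lp_ge2[OF assms(1), where a=a and b=b] nn by simp_all
      ultimately have "a = 0" "b = 0" using assms by simp_all
      then show ?thesis using lp_zero2[OF assms(1), of c] lp_sym[of p c 0] lp_nonneg assms by simp
    next
      assume "c = 0" then show ?thesis using nn by simp
    qed
  next
    case False
    then have np: "n > 0" and cp: "c > 0" using n0 assms by auto
    define s where "s = n + c"
    define t where "t = c / s"
    have sp: "s > 0" using np cp s_def by simp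
    have t01: "0 \<le> t" "t \<le> 1" using np cp sp unfolding t_def s_def by auto
    have e3: "1 - t = n/s"
      using np sp unfolding t_def s_def by (auto simp: field_simps)
    have e1: "(1-t)*(a/n) + t*1 = (a+c)/s"
      unfolding e3 using np sp by (simp add: t_def add_divide_distrib)
    have e2: "(1-t)*(b/n) + t*0 = b/s"
      unfolding e3 using np sp by simp
    have i1: "((a+c)/s) powr q \<le> (n/s)*(a/n) powr q + t"
      using cvx[OF q(2), of "a/n" 1 t] assms np t01 e1 e3 by simp
    have i2: "(b/s) powr q \<le> (n/s)*(b/n) powr q"
      using cvx[OF q(2), of "b/n" 0 t] assms np t01 e2 e3 q by simp
    have "(n/s)*(a/n) powr q + (n/s)*(b/n) powr q = (n/s) * ((a powr q + b powr q) / n powr q)"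
      using assms np by (simp add: powr_divide add_divide_distrib distrib_left)
    also have "\<dots> = n/s" using nq np by (metis div_self div_0 mult_1_right powr_gt_zero less_irrefl)
    finally have "((a+c)/s) powr q + (b/s) powr q \<le> n/s + t" using i1 i2 by linarith
    also have "n/s + t = 1" using sp unfolding t_def by (simp add: s_def add_divide_distrib[symmetric])
    finally have "((a+c)/s) powr q + (b/s) powr q \<le> 1" .
    moreover have "((a+c)/s) powr q = (a+c) powr q / s powr q"
      using powr_divide[of "a+c" s q] assms sp by linarith
    moreover have "(b/s) powr q = b powr q / s powr q"
      using powr_divide[of b s q] assms sp by linarith
    ultimately have f: "(a+c) powr q / s powr q + b powr q / s powr q \<le> 1" by simp
    have X: "s powr q > 0" using sp by simp
    have "(a+c) powr q + b powr q = ((a+c) powr q / s powr q + b powr q / s powr q) * s powr q"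
      using X by (simp add: field_simps)
    also have "\<dots> \<le> 1 * s powr q" using f X by (intro mult_right_mono) auto
    finally have le: "(a+c) powr q + b powr q \<le> s powr q" by simp
    have "lp_norm2 p (a+c) b = ((a+c) powr q + b powr q) powr (1/q)" using N assms by simp
    also have "\<dots> \<le> (s powr q) powr (1/q)" using le q by (intro powr_mono2) auto
    also have "\<dots> = s" using sp q by (simp add: powr_powr)
    finally show ?thesis using nn s_def by simp
  qed
qed (use assms in \<open>auto simp: lp_norm2_def\<close>)


lemma key1:
  assumes "p \<ge> 1" "0 \<le> u" "u \<le> v + e" "0 \<le> v" "0 \<le> e" "0 \<le> w"
  shows "lp_norm2 p u w \<le> lp_norm2 p v w + e"
proof -
  have "lp_norm2 p u w \<le> lp_norm2 p (v + e) w" using assms by (intro lp_mono) auto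
  also have "\<dots> \<le> lp_norm2 p v w + e" using assms by (intro lp_tri) auto
  finally show ?thesis .
qed

lemma key2:
  assumes "p \<ge> 1" "0 \<le> u" "u \<le> v + e" "0 \<le> v" "0 \<le> e" "0 \<le> w"
  shows "lp_norm2 p w u \<le> lp_norm2 p w v + e"
  using key1[OF assms] lp_sym by metis

lemma wedge_mem:
  "Inl x \<in> wedge_carrier C Y star \<longleftrightarrow> x \<in> C"
  "Inr y \<in> wedge_carrier C Y star \<longleftrightarrow> y \<in> Y \<and> y \<noteq> star"
  unfolding wedge_carrier_def by auto

lemma wedge_metric:
  assumes MC: "Metric_space C dC" and th: "theta \<in> C"
    and MY: "Metric_space Y dY" and st: "star \<in> Y" and p: "p \<ge> 1"
  shows "Metric_space (wedge_carrier C Y star) (wedge_dist p dC theta dY star)"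
proof
  interpret C: Metric_space C dC by (rule MC)
  interpret Y: Metric_space Y dY by (rule MY)
  fix x y z :: "'a + 'b"
  show "0 \<le> wedge_dist p dC theta dY star x y"
    by (cases x; cases y) (auto simp: lp_nonneg)
  show "wedge_dist p dC theta dY star x y = wedge_dist p dC theta dY star y x"
    by (cases x; cases y) (auto simp: C.commute Y.commute)
  {
    assume xy: "x \<in> wedge_carrier C Y star" "y \<in> wedge_carrier C Y star"
    show "(wedge_dist p dC theta dY star x y = 0) = (x = y)"
    proof (cases x; cases y)
      fix a b assume e: "x = Inl a" "y = Inr b"
      then have "b \<in> Y" "b \<noteq> star" using xy by (auto simp: wedge_mem)
      moreover have "\<bar>dY b star\<bar> \<le> lp_norm2 p (dC a theta) (dY b star)" by (rule lp_ge2[OF p])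
      ultimately have "lp_norm2 p (dC a theta) (dY b star) \<noteq> 0"
        using st Y.nonneg[of b star] Y.zero[of b star] by linarith
      then show ?thesis using e by simp
    next
      fix a b assume e: "x = Inr b" "y = Inl a"
      then have "b \<in> Y" "b \<noteq> star" using xy by (auto simp: wedge_mem)
      moreover have "\<bar>dY b star\<bar> \<le> lp_norm2 p (dC a theta) (dY b star)" by (rule lp_ge2[OF p])
      ultimately have "lp_norm2 p (dC a theta) (dY b star) \<noteq> 0"
        using st Y.nonneg[of b star] Y.zero[of b star] by linarith
      then show ?thesis using e by simp
    qed (use xy in \<open>auto simp: wedge_mem\<close>)
  }
  assume xyz: "x \<in> wedge_carrier C Y star" "y \<in> wedge_carrier C Y star" "z \<in> wedge_carrier C Y star"
  show "wedge_dist p dC theta dY star x z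
        \<le> wedge_dist p dC theta dY star x y + wedge_dist p dC theta dY star y z"
  proof (cases x; cases y; cases z)
    fix a1 a2 b assume e: "x = Inl a1" "y = Inl a2" "z = Inr b"
    then have m: "a1 \<in> C" "a2 \<in> C" using xyz by (auto simp: wedge_mem)
    have "dC a1 theta \<le> dC a2 theta + dC a1 a2" using C.triangle[OF m(1) m(2) th] by simp
    then show ?thesis using e key1[OF p, of "dC a1 theta" "dC a2 theta" "dC a1 a2" "dY b star"] by simp
  next
    fix a1 a2 b assume e: "x = Inr b" "y = Inl a2" "z = Inl a1"
    then have m: "a1 \<in> C" "a2 \<in> C" using xyz by (auto simp: wedge_mem)
    have "dC a1 theta \<le> dC a2 theta + dC a1 a2" using C.triangle[OF m(1) m(2) th] by simp
    then show ?thesis using e key1[OF p, of "dC a1 theta" "dC a2 theta" "dC a1 a2" "dY b star"] by (simp add: C.commute)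
  next
    fix a1 a2 b assume e: "x = Inl a1" "y = Inr b" "z = Inl a2"
    then have m: "a1 \<in> C" "a2 \<in> C" using xyz by (auto simp: wedge_mem)
    have "dC a1 a2 \<le> dC a1 theta + dC a2 theta" using C.triangle[OF m(1) th m(2)] by (simp add: C.commute)
    then show ?thesis using e lp_ge1[OF p, of "dC a1 theta" "dY b star"] lp_ge1[OF p, of "dC a2 theta" "dY b star"] by simp
  next
    fix a b1 b2 assume e: "x = Inr b1" "y = Inr b2" "z = Inl a"
    then have m: "b1 \<in> Y" "b2 \<in> Y" using xyz by (auto simp: wedge_mem)
    have "dY b1 star \<le> dY b2 star + dY b1 b2" using Y.triangle[OF m(1) m(2) st] by simp
    then show ?thesis using e key2[OF p, of "dY b1 star" "dY b2 star" "dY b1 b2" "dC a theta"] by simp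
  next
    fix a b1 b2 assume e: "x = Inl a" "y = Inr b2" "z = Inr b1"
    then have m: "b1 \<in> Y" "b2 \<in> Y" using xyz by (auto simp: wedge_mem)
    have "dY b1 star \<le> dY b2 star + dY b1 b2" using Y.triangle[OF m(1) m(2) st] by simp
    then show ?thesis using e key2[OF p, of "dY b1 star" "dY b2 star" "dY b1 b2" "dC a theta"] by (simp add: Y.commute)
  next
    fix a b1 b2 assume e: "x = Inr b1" "y = Inl a" "z = Inr b2"
    then have m: "b1 \<in> Y" "b2 \<in> Y" using xyz by (auto simp: wedge_mem)
    have "dY b1 b2 \<le> dY b1 star + dY b2 star" using Y.triangle[OF m(1) st m(2)] by (simp add: Y.commute)
    then show ?thesis using e lp_ge2[OF p, of "dY b1 star" "dC a theta"] lp_ge2[OF p, of "dY b2 star" "dC a theta"] by simp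
  qed (use xyz in \<open>auto simp: wedge_mem intro: C.triangle Y.triangle\<close>)
qed


theorem proposition6p24:
  fixes C :: "'a set" and dC :: "'a \<Rightarrow> 'a \<Rightarrow> real" and theta :: 'a
    and Y :: "'b set" and dY :: "'b \<Rightarrow> 'b \<Rightarrow> real" and star :: 'b
    and p :: ereal and t :: real and \<sigma> :: "'a set" and \<tau> :: "'b set"
  assumes "Metric_space C dC" and "theta \<in> C"
    and "Metric_space Y dY" and "star \<in> Y"
    and "p \<ge> 1"
    and "t \<ge> 0"
    and "finite \<sigma>" and "\<sigma> \<noteq> {}" and "\<sigma> \<subseteq> C"
    and "finite \<tau>" and "\<tau> \<noteq> {}" and "\<tau> \<subseteq> Y - {star}"
  shows "cech_simplex (wedge_carrier C Y star) (wedge_dist p dC theta dY star) t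
            (Inl ` \<sigma> \<union> Inr ` \<tau>)
     \<longleftrightarrow>
         (\<exists>z\<in>C. (\<forall>x\<in>\<sigma>. z \<in> Metric_space.mcball C dC x t) \<and>
                 lp_norm2 p (dC z theta) (Max ((\<lambda>y. dY y star) ` \<tau>)) \<le> t)
       \<or> (\<exists>w\<in>Y. (\<forall>y\<in>\<tau>. w \<in> Metric_space.mcball Y dY y t) \<and>
                 lp_norm2 p (Max ((\<lambda>x. dC x theta) ` \<sigma>)) (dY w star) \<le> t)"
proof -
  note MC = assms(1) and th = assms(2) and MY = assms(3) and st = assms(4) and p = assms(5)
  interpret C: Metric_space C dC by (rule MC)
  interpret Y: Metric_space Y dY by (rule MY)
  interpret W: Metric_space "wedge_carrier C Y star" "wedge_dist p dC theta dY star"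
    by (rule wedge_metric[OF MC th MY st p])
  define A where "A = Max ((\<lambda>x. dC x theta) ` \<sigma>)"
  define B where "B = Max ((\<lambda>y. dY y star) ` \<tau>)"
  have Ale: "dC x theta \<le> A" if "x \<in> \<sigma>" for x
    unfolding A_def using that assms(7) by (intro Max_ge) auto
  have Ble: "dY y star \<le> B" if "y \<in> \<tau>" for y
    unfolding B_def using that assms(10) by (intro Max_ge) auto
  obtain xA where xA: "xA \<in> \<sigma>" "dC xA theta = A"
  proof -
    have "A \<in> (\<lambda>x. dC x theta) ` \<sigma>" unfolding A_def using assms(7,8) by (intro Max_in) auto
    then show ?thesis using that by blast
  qed
  obtain yB where yB: "yB \<in> \<tau>" "dY yB star = B"
  proof -
    have "B \<in> (\<lambda>y. dY y star) ` \<tau>" unfolding B_def using assms(10,11) by (intro Max_in) auto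
    then show ?thesis using that by blast
  qed
  have S: "finite (Inl ` \<sigma> \<union> Inr ` \<tau>)" "Inl ` \<sigma> \<union> Inr ` \<tau> \<subseteq> wedge_carrier C Y star"
    using assms(7,9,10,12) by (auto simp: wedge_carrier_def)
  have A0: "0 \<le> A" using Ale[OF xA(1)] C.nonneg[of xA theta] by linarith
  have B0: "0 \<le> B" using Ble[OF yB(1)] Y.nonneg[of yB star] by linarith
  let ?D = "wedge_dist p dC theta dY star"
  have "cech_simplex (wedge_carrier C Y star) ?D t (Inl ` \<sigma> \<union> Inr ` \<tau>) \<longleftrightarrow>
        (\<exists>w\<in>wedge_carrier C Y star. \<forall>s\<in>Inl ` \<sigma> \<union> Inr ` \<tau>. ?D s w \<le> t)"
  proof -
    have "(\<forall>s\<in>Inl ` \<sigma> \<union> Inr ` \<tau>. w \<in> W.mcball s t) \<longleftrightarrow> (\<forall>s\<in>Inl ` \<sigma> \<union> Inr ` \<tau>. ?D s w \<le> t)"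
      if "w \<in> wedge_carrier C Y star" for w
      using S(2) that unfolding W.mcball_def by blast
    then show ?thesis using S unfolding cech_simplex_def by (meson)
  qed
  also have "\<dots> \<longleftrightarrow> (\<exists>z\<in>C. (\<forall>x\<in>\<sigma>. dC x z \<le> t) \<and> lp_norm2 p (dC z theta) B \<le> t)
       \<or> (\<exists>w\<in>Y. (\<forall>y\<in>\<tau>. dY y w \<le> t) \<and> lp_norm2 p A (dY w star) \<le> t)"
  proof
    assume "\<exists>w\<in>wedge_carrier C Y star. \<forall>s\<in>Inl ` \<sigma> \<union> Inr ` \<tau>. ?D s w \<le> t"
    then obtain w where w: "w \<in> wedge_carrier C Y star" "\<forall>s\<in>Inl ` \<sigma> \<union> Inr ` \<tau>. ?D s w \<le> t"
      by blast
    have w1: "\<forall>x\<in>\<sigma>. ?D (Inl x) w \<le> t" and w2: "\<forall>y\<in>\<tau>. ?D (Inr y) w \<le> t" using w(2) by auto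
    show "(\<exists>z\<in>C. (\<forall>x\<in>\<sigma>. dC x z \<le> t) \<and> lp_norm2 p (dC z theta) B \<le> t)
       \<or> (\<exists>w\<in>Y. (\<forall>y\<in>\<tau>. dY y w \<le> t) \<and> lp_norm2 p A (dY w star) \<le> t)"
    proof (cases w)
      case (Inl z)
      have "z \<in> C" using w(1) Inl by (simp add: wedge_mem)
      moreover have "\<forall>x\<in>\<sigma>. dC x z \<le> t" using w1 Inl by simp
      moreover have "lp_norm2 p (dC z theta) B \<le> t" using w2 Inl yB by auto
      ultimately show ?thesis by blast
    next
      case (Inr v)
      have "v \<in> Y" using w(1) Inr by (simp add: wedge_mem)
      moreover have "\<forall>y\<in>\<tau>. dY y v \<le> t" using w2 Inr by simp
      moreover have "lp_norm2 p A (dY v star) \<le> t" using w1 Inr xA by auto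
      ultimately show ?thesis by blast
    qed
  next
    assume "(\<exists>z\<in>C. (\<forall>x\<in>\<sigma>. dC x z \<le> t) \<and> lp_norm2 p (dC z theta) B \<le> t)
       \<or> (\<exists>w\<in>Y. (\<forall>y\<in>\<tau>. dY y w \<le> t) \<and> lp_norm2 p A (dY w star) \<le> t)"
    then show "\<exists>w\<in>wedge_carrier C Y star. \<forall>s\<in>Inl ` \<sigma> \<union> Inr ` \<tau>. ?D s w \<le> t"
    proof
      assume "\<exists>z\<in>C. (\<forall>x\<in>\<sigma>. dC x z \<le> t) \<and> lp_norm2 p (dC z theta) B \<le> t"
      then obtain z where z: "z \<in> C" "\<forall>x\<in>\<sigma>. dC x z \<le> t" "lp_norm2 p (dC z theta) B \<le> t" by blast
      have "lp_norm2 p (dC z theta) (dY y star) \<le> t" if "y \<in> \<tau>" for y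
        using lp_mono[OF p, of "dC z theta" "dC z theta" "dY y star" B] Ble[OF that] z(3) B0 by simp
      then show ?thesis using z by (intro bexI[of _ "Inl z"]) (auto simp: wedge_mem)
    next
      assume "\<exists>w\<in>Y. (\<forall>y\<in>\<tau>. dY y w \<le> t) \<and> lp_norm2 p A (dY w star) \<le> t"
      then obtain v where v: "v \<in> Y" "\<forall>y\<in>\<tau>. dY y v \<le> t" "lp_norm2 p A (dY v star) \<le> t" by blast
      show ?thesis
      proof (cases "v = star")
        case False
        have "lp_norm2 p (dC x theta) (dY v star) \<le> t" if "x \<in> \<sigma>" for x
          using lp_mono[OF p, of "dC x theta" A "dY v star" "dY v star"] Ale[OF that] v(3) A0 by simp
        then show ?thesis using v False by (intro bexI[of _ "Inr v"]) (auto simp: wedge_mem)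
      next
        case True
        have "dC x theta \<le> t" if "x \<in> \<sigma>" for x
          using Ale[OF that] lp_ge1[OF p, of A "dY v star"] v(3) A0 by simp
        moreover have "lp_norm2 p (dC theta theta) (dY y star) \<le> t" if "y \<in> \<tau>" for y
          using v(2) that True lp_zero2[OF p, of "dY y star"] lp_sym[of p 0 "dY y star"] th by simp
        ultimately show ?thesis using th by (intro bexI[of _ "Inl theta"]) (auto simp: wedge_mem)
      qed
    qed
  qed
  also have "\<dots> \<longleftrightarrow> (\<exists>z\<in>C. (\<forall>x\<in>\<sigma>. z \<in> C.mcball x t) \<and> lp_norm2 p (dC z theta) B \<le> t)
       \<or> (\<exists>w\<in>Y. (\<forall>y\<in>\<tau>. w \<in> Y.mcball y t) \<and> lp_norm2 p A (dY w star) \<le> t)"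
  proof -
    have "(\<forall>x\<in>\<sigma>. z \<in> C.mcball x t) \<longleftrightarrow> (\<forall>x\<in>\<sigma>. dC x z \<le> t)" if "z \<in> C" for z
      using that assms(9) unfolding C.mcball_def by auto
    moreover have "(\<forall>y\<in>\<tau>. w \<in> Y.mcball y t) \<longleftrightarrow> (\<forall>y\<in>\<tau>. dY y w \<le> t)" if "w \<in> Y" for w
      using that assms(12) unfolding Y.mcball_def by auto
    ultimately show ?thesis by (meson)
  qed
  finally show ?thesis unfolding A_def B_def .
qed

end
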